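(* Let $d\ge 1$ and let $s$ be an odd integer with $1<s<2^d$. Then $\lambda^*(d,s)\le \frac12$.
   Context: For integers $n\ge d\ge 1$, a $d$-flat in $\mathbb{F}_2^n$ is a set $x_0+U$ with $x_0\in\mathbb{F}_2^n$ and $U$ a $d$-dimensional linear subspace of $\mathbb{F}_2^n$. For $A\subseteq\mathbb{F}_2^n$ and an integer $0\le s\le 2^d$, $\lambda^*(n,d,s,A)$ denotes the fraction of $d$-flats $Q$ in $\mathbb{F}_2^n$ with $|Q\cap A|=s$. Let $\lambda^*(n,d,s)=\max_{A\subseteq\mathbb{F}_2^n}\lambda^*(n,d,s,A)$; this is non-increasing in $n$, and $\lambda^*(d,s)=\lim_{n\to\infty}\lambda^*(n,d,s)$. *)

theory Defs
  imports Complex_Main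
begin

text \<open>Vectors of F_2^n are represented by their supports, i.e. subsets of {..<n};
  vector addition is symmetric difference.\<close>

definition cube :: "nat \<Rightarrow> nat set set" where
  "cube n = Pow {..<n}"

definition vadd :: "nat set \<Rightarrow> nat set \<Rightarrow> nat set" where
  "vadd x y = (x - y) \<union> (y - x)"

definition vsum :: "nat set set \<Rightarrow> nat set" where
  "vsum S = {i. odd (card {v \<in> S. i \<in> v})}"

definition lin_indep :: "nat set set \<Rightarrow> bool" where
  "lin_indep B \<longleftrightarrow> finite B \<and> (\<forall>S \<subseteq> B. S \<noteq> {} \<longrightarrow> vsum S \<noteq> {})"

definition span2 :: "nat set set \<Rightarrow> nat set set" where
  "span2 B = vsum ` Pow B"

definition subspace_dim :: "nat \<Rightarrow> nat \<Rightarrow> nat set set \<Rightarrow> bool" where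
  "subspace_dim n d U \<longleftrightarrow>
     (\<exists>B. B \<subseteq> cube n \<and> lin_indep B \<and> card B = d \<and> U = span2 B)"

definition flats :: "nat \<Rightarrow> nat \<Rightarrow> nat set set set" where
  "flats n d = {vadd x0 ` U | x0 U. x0 \<in> cube n \<and> subspace_dim n d U}"

definition lambda_A :: "nat \<Rightarrow> nat \<Rightarrow> nat \<Rightarrow> nat set set \<Rightarrow> real" where
  "lambda_A n d s A =
     real (card {Q \<in> flats n d. card (Q \<inter> A) = s}) / real (card (flats n d))"

definition lambda_n :: "nat \<Rightarrow> nat \<Rightarrow> nat \<Rightarrow> real" where
  "lambda_n n d s = Max ((\<lambda>A. lambda_A n d s A) ` Pow (cube n))"

definition lambda_star :: "nat \<Rightarrow> nat \<Rightarrow> real" where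
  "lambda_star d s = lim (\<lambda>n. lambda_n n d s)"

end

theory Submission imports Defs "HOL-Library.FuncSet" begin

lemma vadd_comm: "vadd x y = vadd y x" unfolding vadd_def by auto
lemma vadd_assoc: "vadd (vadd x y) z = vadd x (vadd y z)" unfolding vadd_def by auto
lemma vadd_self[simp]: "vadd x x = {}" unfolding vadd_def by auto
lemma vadd_empty_left[simp]: "vadd {} x = x" unfolding vadd_def by auto
lemma vadd_empty_right[simp]: "vadd x {} = x" unfolding vadd_def by auto
lemma vadd_cancel[simp]: "vadd x (vadd x y) = y" unfolding vadd_def by auto
lemma vadd_cancel2[simp]: "vadd (vadd y x) x = y" unfolding vadd_def by auto
lemma mem_vadd: "i \<in> vadd x y \<longleftrightarrow> (i \<in> x) \<noteq> (i \<in> y)" unfolding vadd_def by auto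
lemma vadd_eq_empty: "vadd x y = {} \<longleftrightarrow> x = y" unfolding vadd_def by auto

lemma finite_cube[simp]: "finite (cube n)" unfolding cube_def by simp
lemma card_cube: "card (cube n) = 2 ^ n" unfolding cube_def by (simp add: card_Pow)
lemma empty_cube[simp]: "{} \<in> cube n" unfolding cube_def by simp
lemma cube_vadd[simp]: "x \<in> cube n \<Longrightarrow> y \<in> cube n \<Longrightarrow> vadd x y \<in> cube n"
  unfolding cube_def vadd_def by blast
lemma cube_mono: "n \<le> m \<Longrightarrow> cube n \<subseteq> cube m"
  unfolding cube_def by auto

lemma vsum_empty[simp]: "vsum {} = {}" unfolding vsum_def by simp

lemma vsum_union_disj:
  assumes "finite S" "finite T" "S \<inter> T = {}"
  shows "vsum (S \<union> T) = vadd (vsum S) (vsum T)"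
proof -
  have "\<And>i. {v \<in> S \<union> T. i \<in> v} = {v\<in>S. i \<in> v} \<union> {v\<in>T. i\<in>v}" by blast
  moreover have "\<And>i. card ({v\<in>S. i \<in> v} \<union> {v\<in>T. i\<in>v}) = card {v\<in>S. i \<in> v} + card {v\<in>T. i\<in>v}"
    using assms by (intro card_Un_disjoint) auto
  ultimately show ?thesis unfolding vsum_def vadd_def by auto
qed

lemma vsum_insert: "finite S \<Longrightarrow> b \<notin> S \<Longrightarrow> vsum (insert b S) = vadd b (vsum S)"
proof -
  assume a: "finite S" "b \<notin> S"
  have "vsum ({b} \<union> S) = vadd (vsum {b}) (vsum S)" using a by (intro vsum_union_disj) auto
  moreover have "vsum {b} = b" unfolding vsum_def
  proof (intro set_eqI)
    fix i
    have "{v \<in> {b}. i \<in> v} = (if i \<in> b then {b} else {})" by auto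
    then show "i \<in> {i. odd (card {v \<in> {b}. i \<in> v})} \<longleftrightarrow> i \<in> b"
      by simp
  qed
  ultimately show ?thesis by simp
qed

lemma vsum_symdiff:
  assumes "finite S" "finite T"
  shows "vsum ((S - T) \<union> (T - S)) = vadd (vsum S) (vsum T)"
proof -
  have S: "S = (S - T) \<union> (S \<inter> T)" and T: "T = (T - S) \<union> (S \<inter> T)" by auto
  have "vsum S = vadd (vsum (S - T)) (vsum (S \<inter> T))"
    using assms by (subst S, intro vsum_union_disj) auto
  moreover have "vsum T = vadd (vsum (T - S)) (vsum (S \<inter> T))"
    using assms by (subst T, intro vsum_union_disj) auto
  moreover have "vsum ((S - T) \<union> (T - S)) = vadd (vsum (S - T)) (vsum (T - S))"
    using assms by (intro vsum_union_disj) auto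
  ultimately show ?thesis by (metis vadd_assoc vadd_comm vadd_cancel)
qed

lemma vsum_cube: "S \<subseteq> cube n \<Longrightarrow> vsum S \<in> cube n"
proof -
  assume S: "S \<subseteq> cube n"
  { fix i assume "i \<in> vsum S"
    then have "odd (card {v \<in> S. i \<in> v})" unfolding vsum_def by simp
    then have "{v \<in> S. i \<in> v} \<noteq> {}" by (metis card.empty even_zero)
    then obtain v where "v \<in> S" "i \<in> v" by blast
    with S have "i < n" unfolding cube_def by auto }
  then show ?thesis unfolding cube_def by auto
qed

lemma span_cube: "B \<subseteq> cube n \<Longrightarrow> span2 B \<subseteq> cube n"
  unfolding span2_def using vsum_cube by blast

lemma indep_inj:
  assumes "lin_indep B" shows "inj_on vsum (Pow B)"
proof
  fix S T assume S: "S \<in> Pow B" and T: "T \<in> Pow B" and e: "vsum S = vsum T"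
  have fin: "finite S" "finite T" using assms S T unfolding lin_indep_def by (auto intro: finite_subset)
  have "vsum ((S - T) \<union> (T - S)) = {}" using vsum_symdiff[OF fin] e by simp
  moreover have "(S - T) \<union> (T - S) \<subseteq> B" using S T by auto
  ultimately have "(S - T) \<union> (T - S) = {}" using assms unfolding lin_indep_def by blast
  then show "S = T" by blast
qed

lemma card_span: "lin_indep B \<Longrightarrow> card (span2 B) = 2 ^ card B"
proof -
  assume a: "lin_indep B"
  have "card (vsum ` Pow B) = card (Pow B)" by (rule card_image[OF indep_inj[OF a]])
  also have "\<dots> = 2 ^ card B" using a unfolding lin_indep_def by (simp add: card_Pow)
  finally show ?thesis unfolding span2_def .
qed

lemma finite_span: "lin_indep B \<Longrightarrow> finite (span2 B)"
  unfolding span2_def lin_indep_def by simp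

lemma span_empty_mem: "{} \<in> span2 B"
  unfolding span2_def by (metis Pow_bottom image_eqI vsum_empty)

lemma mem_span_self: "finite B \<Longrightarrow> b \<in> B \<Longrightarrow> b \<in> span2 B"
proof -
  assume "b \<in> B"
  have "vsum {b} = b" using vsum_insert[of "{}" b] by simp
  moreover have "{b} \<in> Pow B" using \<open>b \<in> B\<close> by simp
  ultimately show ?thesis unfolding span2_def by (metis image_eqI)
qed

lemma span_insert:
  assumes "finite B" "v \<notin> B"
  shows "span2 (insert v B) = span2 B \<union> vadd v ` span2 B"
proof -
  have P: "Pow (insert v B) = Pow B \<union> insert v ` Pow B" by (rule Pow_insert)
  have "vsum ` (insert v ` Pow B) = vadd v ` vsum ` Pow B"
  proof -
    have "\<And>S. S \<in> Pow B \<Longrightarrow> vsum (insert v S) = vadd v (vsum S)"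
      using assms by (intro vsum_insert) (auto intro: finite_subset)
    then have "vsum ` (insert v ` Pow B) = (\<lambda>S. vadd v (vsum S)) ` Pow B"
      unfolding image_image by (rule image_cong[OF refl])
    then show ?thesis by (simp add: image_image)
  qed
  then show ?thesis unfolding span2_def P image_Un by simp
qed

lemma indep_insert:
  assumes "lin_indep B" "v \<notin> span2 B"
  shows "lin_indep (insert v B)" "v \<notin> B"
proof -
  have fB: "finite B" using assms unfolding lin_indep_def by simp
  show vB: "v \<notin> B" using assms mem_span_self fB by blast
  show "lin_indep (insert v B)" unfolding lin_indep_def
  proof (intro conjI allI impI)
    show "finite (insert v B)" using fB by simp
    fix S assume S: "S \<subseteq> insert v B" "S \<noteq> {}"
    show "vsum S \<noteq> {}"
    proof (cases "v \<in> S")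
      case True
      have fS: "finite (S - {v})" using S fB by (auto intro: finite_subset)
      have "vsum S = vadd v (vsum (S - {v}))"
        using vsum_insert[OF fS, of v] True by (simp add: insert_absorb)
      moreover have "vsum (S - {v}) \<in> span2 B" unfolding span2_def using S by auto
      ultimately show ?thesis using assms(2) vadd_eq_empty by metis
    next
      case False
      then have "S \<subseteq> B" using S by auto
      then show ?thesis using assms S unfolding lin_indep_def by blast
    qed
  qed
qed


lemma vadd_left_comm: "vadd x (vadd y z) = vadd y (vadd x z)"
  by (metis vadd_assoc vadd_comm)
lemmas vadd_ac = vadd_assoc vadd_comm vadd_left_comm

lemma flats_iff: "Q \<in> flats n d \<longleftrightarrow>
  (\<exists>x0 B. x0 \<in> cube n \<and> B \<subseteq> cube n \<and> lin_indep B \<and> card B = d \<and> Q = vadd x0 ` span2 B)"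
  unfolding flats_def subspace_dim_def by (intro iffI; elim exE conjE CollectE; blast)

lemma flat_sub_cube: "Q \<in> flats n d \<Longrightarrow> Q \<subseteq> cube n"
proof
  fix q assume "Q \<in> flats n d" "q \<in> Q"
  then obtain x0 B where "x0 \<in> cube n" "B \<subseteq> cube n" "Q = vadd x0 ` span2 B"
    unfolding flats_iff by blast
  moreover from this obtain w where "w \<in> span2 B" "q = vadd x0 w" using \<open>q \<in> Q\<close> by blast
  ultimately show "q \<in> cube n" using span_cube cube_vadd by (metis subsetD)
qed

lemma finite_flats: "finite (flats n d)"
proof (rule finite_subset)
  show "flats n d \<subseteq> Pow (cube n)" using flat_sub_cube by blast
qed simp

lemma flats_mono: "flats n d \<subseteq> flats (Suc n) d"
proof
  fix Q assume "Q \<in> flats n d"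
  then obtain x0 B where "x0 \<in> cube n" "B \<subseteq> cube n" "lin_indep B" "card B = d" "Q = vadd x0 ` span2 B"
    unfolding flats_iff by blast
  moreover have c: "cube n \<subseteq> cube (Suc n)" by (rule cube_mono) simp
  ultimately have "x0 \<in> cube (Suc n)" "B \<subseteq> cube (Suc n)" by auto
  with \<open>lin_indep B\<close> \<open>card B = d\<close> \<open>Q = vadd x0 ` span2 B\<close>
  show "Q \<in> flats (Suc n) d" unfolding flats_iff by blast
qed

definition linm :: "nat \<Rightarrow> (nat set \<Rightarrow> nat set) \<Rightarrow> bool" where
  "linm M l \<longleftrightarrow> (\<forall>u\<in>cube M. \<forall>v\<in>cube M. l (vadd u v) = vadd (l u) (l v))
     \<and> inj_on l (cube M) \<and> l ` cube M \<subseteq> cube M"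

lemma linm_empty: "linm M l \<Longrightarrow> l {} = {}"
proof -
  assume "linm M l"
  then have "\<forall>u\<in>cube M. \<forall>v\<in>cube M. l (vadd u v) = vadd (l u) (l v)" unfolding linm_def by blast
  then have "l (vadd {} {}) = vadd (l {}) (l {})" using empty_cube by blast
  then show ?thesis by simp
qed

lemma linm_vsum:
  assumes "linm M l" "finite S" "S \<subseteq> cube M"
  shows "l (vsum S) = vsum (l ` S)"
  using assms(2,3)
proof (induction S rule: finite_induct)
  case empty then show ?case using linm_empty[OF assms(1)] by simp
next
  case (insert b S)
  have inj: "inj_on l (cube M)" and add: "\<And>u v. u \<in> cube M \<Longrightarrow> v \<in> cube M \<Longrightarrow> l (vadd u v) = vadd (l u) (l v)"
    using assms(1) unfolding linm_def by auto
  have bM: "b \<in> cube M" and SM: "S \<subseteq> cube M" using insert.prems by auto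
  have lb: "l b \<notin> l ` S"
  proof
    assume "l b \<in> l ` S"
    then obtain c where "c \<in> S" "l b = l c" by blast
    then have "b = c" using inj bM SM unfolding inj_on_def by blast
    then show False using insert.hyps \<open>c \<in> S\<close> by simp
  qed
  have "l (vsum (insert b S)) = l (vadd b (vsum S))" using insert.hyps by (simp add: vsum_insert)
  also have "\<dots> = vadd (l b) (l (vsum S))"
    using add[OF bM vsum_cube[OF SM]] .
  also have "\<dots> = vadd (l b) (vsum (l ` S))" using insert.IH[OF SM] by simp
  also have "\<dots> = vsum (l ` insert b S)" using insert.hyps lb by (simp add: vsum_insert)
  finally show ?case .
qed

lemma linm_basis:
  assumes "linm M l" "B \<subseteq> cube M" "lin_indep B"
  shows "l ` span2 B = span2 (l ` B)" "lin_indep (l ` B)" "card (l ` B) = card B" "l ` B \<subseteq> cube M"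
proof -
  have fB: "finite B" using assms unfolding lin_indep_def by simp
  have inj: "inj_on l B" using assms unfolding linm_def by (meson inj_on_subset)
  have vs: "\<And>S. S \<subseteq> B \<Longrightarrow> l (vsum S) = vsum (l ` S)"
    using assms fB by (intro linm_vsum) (auto intro: finite_subset)
  have "l ` span2 B = (\<lambda>S. vsum (l ` S)) ` Pow B" unfolding span2_def image_image
    using vs by (intro image_cong) auto
  also have "\<dots> = vsum ` (image l ` Pow B)" by (simp add: image_image)
  also have "image l ` Pow B = Pow (l ` B)" by (rule image_Pow_surj) simp
  finally show "l ` span2 B = span2 (l ` B)" unfolding span2_def .
  show "card (l ` B) = card B" using inj by (rule card_image)
  show "l ` B \<subseteq> cube M" using assms unfolding linm_def by blast
  show "lin_indep (l ` B)" unfolding lin_indep_def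
  proof (intro conjI allI impI)
    show "finite (l ` B)" using fB by simp
    fix T assume T: "T \<subseteq> l ` B" "T \<noteq> {}"
    define S where "S = B \<inter> l -` T"
    have SB: "S \<subseteq> B" and TS: "T = l ` S" unfolding S_def using T by auto
    have "S \<noteq> {}" using T TS by auto
    then have "vsum S \<noteq> {}" using assms(3) SB unfolding lin_indep_def by blast
    moreover have "vsum S \<in> cube M" using SB assms(2) by (intro vsum_cube) auto
    moreover have "vsum T = l (vsum S)" using vs SB TS by simp
    ultimately show "vsum T \<noteq> {}"
      using assms(1) linm_empty[OF assms(1)] unfolding linm_def inj_on_def
      by (metis empty_cube)
  qed
qed

definition affm :: "nat \<Rightarrow> (nat set \<Rightarrow> nat set) set" where
  "affm M = {g. bij_betw g (cube M) (cube M)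
     \<and> (\<forall>x\<in>cube M. \<forall>y\<in>cube M. \<forall>z\<in>cube M. g (vadd x (vadd y z)) = vadd (g x) (vadd (g y) (g z)))
     \<and> (\<forall>x. x \<notin> cube M \<longrightarrow> g x = {})}"

definition compm :: "nat \<Rightarrow> (nat set \<Rightarrow> nat set) \<Rightarrow> (nat set \<Rightarrow> nat set) \<Rightarrow> (nat set \<Rightarrow> nat set)" where
  "compm M g h = (\<lambda>x. if x \<in> cube M then g (h x) else {})"

lemma affm_cube: "g \<in> affm M \<Longrightarrow> x \<in> cube M \<Longrightarrow> g x \<in> cube M"
  unfolding affm_def bij_betw_def by blast

lemma affm_inj: "g \<in> affm M \<Longrightarrow> inj_on g (cube M)"
  unfolding affm_def bij_betw_def by blast

lemma affm_surj: "g \<in> affm M \<Longrightarrow> g ` cube M = cube M"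
  unfolding affm_def bij_betw_def by blast

lemma affm_out: "g \<in> affm M \<Longrightarrow> x \<notin> cube M \<Longrightarrow> g x = {}"
  unfolding affm_def by blast

lemma affm_eqI: "g \<in> affm M \<Longrightarrow> h \<in> affm M \<Longrightarrow> (\<And>x. x \<in> cube M \<Longrightarrow> g x = h x) \<Longrightarrow> g = h"
  using affm_out by (intro ext) metis

lemma finite_affm: "finite (affm M)"
proof -
  have "inj_on (\<lambda>g. restrict g (cube M)) (affm M)"
  proof (rule inj_onI)
    fix g h assume g: "g \<in> affm M" and h: "h \<in> affm M" and e: "restrict g (cube M) = restrict h (cube M)"
    show "g = h"
    proof (rule affm_eqI[OF g h])
      fix x assume x: "x \<in> cube M"
      have "restrict g (cube M) x = restrict h (cube M) x" using e by simp
      then show "g x = h x" using x by simp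
    qed
  qed
  moreover have "(\<lambda>g. restrict g (cube M)) ` affm M \<subseteq> cube M \<rightarrow>\<^sub>E cube M"
    using affm_cube by auto
  moreover have "finite (cube M \<rightarrow>\<^sub>E cube M)" by (simp add: finite_PiE)
  ultimately show ?thesis by (metis finite_imageD finite_subset)
qed

lemma compm_affm:
  assumes g: "g \<in> affm M" and h: "h \<in> affm M"
  shows "compm M g h \<in> affm M"
proof -
  have "bij_betw (g \<circ> h) (cube M) (cube M)"
    using g h unfolding affm_def by (blast intro: bij_betw_trans)
  then have b: "bij_betw (compm M g h) (cube M) (cube M)"
    by (rule bij_betw_cong[THEN iffD1, rotated]) (simp add: compm_def)
  have a: "\<forall>x\<in>cube M. \<forall>y\<in>cube M. \<forall>z\<in>cube M. compm M g h (vadd x (vadd y z)) =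
     vadd (compm M g h x) (vadd (compm M g h y) (compm M g h z))"
  proof (intro ballI)
    fix x y z assume xyz: "x \<in> cube M" "y \<in> cube M" "z \<in> cube M"
    have "h (vadd x (vadd y z)) = vadd (h x) (vadd (h y) (h z))"
      using h xyz unfolding affm_def by blast
    moreover have "g (vadd (h x) (vadd (h y) (h z))) = vadd (g (h x)) (vadd (g (h y)) (g (h z)))"
      using g xyz affm_cube[OF h] unfolding affm_def by blast
    ultimately show "compm M g h (vadd x (vadd y z)) =
     vadd (compm M g h x) (vadd (compm M g h y) (compm M g h z))"
      using xyz by (simp add: compm_def)
  qed
  show ?thesis unfolding affm_def using a b by (auto simp: compm_def)
qed

lemma affm_flat:
  assumes g: "g \<in> affm M" and Q: "Q \<in> flats M d"
  shows "g ` Q \<in> flats M d"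
proof -
  obtain x0 B where x0: "x0 \<in> cube M" and B: "B \<subseteq> cube M" "lin_indep B" "card B = d"
    and Qe: "Q = vadd x0 ` span2 B" using Q unfolding flats_iff by blast
  define l where "l v = vadd (g (vadd x0 v)) (g x0)" for v
  have aff: "\<And>x y z. x \<in> cube M \<Longrightarrow> y \<in> cube M \<Longrightarrow> z \<in> cube M \<Longrightarrow>
      g (vadd x (vadd y z)) = vadd (g x) (vadd (g y) (g z))" using g unfolding affm_def by blast
  have "linm M l" unfolding linm_def
  proof (intro conjI ballI)
    fix u v assume u: "u \<in> cube M" and v: "v \<in> cube M"
    have "g (vadd (vadd x0 u) (vadd x0 (vadd x0 v))) = vadd (g (vadd x0 u)) (vadd (g x0) (g (vadd x0 v)))"
      by (intro aff) (simp_all add: u v x0)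
    moreover have "vadd (vadd x0 u) (vadd x0 (vadd x0 v)) = vadd x0 (vadd u v)"
      by (simp add: vadd_ac)
    ultimately show "l (vadd u v) = vadd (l u) (l v)" unfolding l_def
      by (simp add: vadd_ac)
  next
    show "inj_on l (cube M)"
    proof (rule inj_onI)
      fix u v assume u: "u \<in> cube M" and v: "v \<in> cube M" and e: "l u = l v"
      then have "g (vadd x0 u) = g (vadd x0 v)" unfolding l_def by (metis vadd_cancel2)
      then have "vadd x0 u = vadd x0 v" using affm_inj[OF g] u v x0 unfolding inj_on_def by simp
      then show "u = v" by (metis vadd_cancel)
    qed
  next
    show "l ` cube M \<subseteq> cube M" unfolding l_def using affm_cube[OF g] x0 by auto
  qed
  note lb = linm_basis[OF this B(1,2)]
  have gx: "\<And>w. w \<in> cube M \<Longrightarrow> g (vadd x0 w) = vadd (g x0) (l w)"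
    unfolding l_def by (simp add: vadd_ac)
  have "g ` Q = (\<lambda>w. vadd (g x0) (l w)) ` span2 B"
    unfolding Qe image_image using gx span_cube[OF B(1)] by (intro image_cong) auto
  also have "\<dots> = vadd (g x0) ` span2 (l ` B)" using lb(1) by (metis image_image)
  finally show ?thesis unfolding flats_iff using lb B affm_cube[OF g x0] by metis
qed


lemma indep_card_le:
  assumes "B \<subseteq> cube M" "lin_indep B" shows "card B \<le> M"
proof -
  have "card (span2 B) \<le> card (cube M)" using span_cube[OF assms(1)] by (intro card_mono) auto
  then have "(2::nat) ^ card B \<le> 2 ^ M" using card_span[OF assms(2)] card_cube by simp
  then show ?thesis by simp
qed

lemma basis_ext:
  "B \<subseteq> cube M \<Longrightarrow> lin_indep B \<Longrightarrow> \<exists>C. B \<subseteq> C \<and> C \<subseteq> cube M \<and> lin_indep C \<and> card C = M"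
proof (induction "M - card B" arbitrary: B rule: less_induct)
  case less
  show ?case
  proof (cases "card B = M")
    case True then show ?thesis using less.prems by (intro exI[of _ B]) simp
  next
    case False
    then have lt: "card B < M" using indep_card_le[OF less.prems] by simp
    have lt2: "card (span2 B) < card (cube M)" using card_span[OF less.prems(2)] card_cube lt by simp
    have "\<not> cube M \<subseteq> span2 B"
    proof
      assume "cube M \<subseteq> span2 B"
      then have "card (cube M) \<le> card (span2 B)" by (rule card_mono[OF finite_span[OF less.prems(2)]])
      then show False using lt2 by simp
    qed
    then obtain v where v: "v \<in> cube M" "v \<notin> span2 B" by blast
    note ins = indep_insert[OF less.prems(2) v(2)]
    have fB: "finite B" using less.prems unfolding lin_indep_def by simp
    have cB: "card (insert v B) = Suc (card B)" using ins(2) fB by simp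
    have sub: "insert v B \<subseteq> cube M" using v less.prems by auto
    have dec: "M - card (insert v B) < M - card B" using cB lt by simp
    obtain C where C: "insert v B \<subseteq> C" "C \<subseteq> cube M" "lin_indep C" "card C = M"
      using less.hyps[OF dec sub ins(1)] by blast
    then have "B \<subseteq> C" by simp
    then show ?thesis using C(2-4) by (intro exI[of _ C]) simp
  qed
qed

lemma basis_span:
  assumes "C \<subseteq> cube M" "lin_indep C" "card C = M" shows "span2 C = cube M"
proof (rule card_subset_eq[OF finite_cube span_cube[OF assms(1)]])
  show "card (span2 C) = card (cube M)" using card_span[OF assms(2)] card_cube assms(3) by simp
qed

lemma flat_transitive:
  assumes Q: "Q \<in> flats M d" and Q': "Q' \<in> flats M d"
  shows "\<exists>g\<in>affm M. g ` Q = Q'"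
proof -
  obtain x0 B where x0: "x0 \<in> cube M" and B: "B \<subseteq> cube M" "lin_indep B" "card B = d"
    and Qe: "Q = vadd x0 ` span2 B" using Q unfolding flats_iff by blast
  obtain y0 B' where y0: "y0 \<in> cube M" and B': "B' \<subseteq> cube M" "lin_indep B'" "card B' = d"
    and Qe': "Q' = vadd y0 ` span2 B'" using Q' unfolding flats_iff by blast
  obtain C where C: "B \<subseteq> C" "C \<subseteq> cube M" "lin_indep C" "card C = M"
    using basis_ext[OF B(1,2)] by blast
  obtain C' where C': "B' \<subseteq> C'" "C' \<subseteq> cube M" "lin_indep C'" "card C' = M"
    using basis_ext[OF B'(1,2)] by blast
  have fC: "finite C" and fC': "finite C'" using C C' unfolding lin_indep_def by auto
  have fB: "finite B" and fB': "finite B'" using fC fC' C(1) C'(1) finite_subset by auto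
  obtain f1 where f1: "bij_betw f1 B B'" using finite_same_card_bij[OF fB fB'] B(3) B'(3) by auto
  have "card (C - B) = card (C' - B')"
    using card_Diff_subset[OF fB C(1)] card_Diff_subset[OF fB' C'(1)] B(3) B'(3) C(4) C'(4) by simp
  then obtain f2 where f2: "bij_betw f2 (C - B) (C' - B')"
    using finite_same_card_bij[of "C - B" "C' - B'"] fC fC' by auto
  define \<sigma> where "\<sigma> x = (if x \<in> B then f1 x else f2 x)" for x
  have s1: "bij_betw \<sigma> B B'" using f1 by (rule bij_betw_cong[THEN iffD1, rotated]) (simp add: \<sigma>_def)
  have s2: "bij_betw \<sigma> (C - B) (C' - B')"
    using f2 by (rule bij_betw_cong[THEN iffD1, rotated]) (simp add: \<sigma>_def)
  have "bij_betw \<sigma> (B \<union> (C - B)) (B' \<union> (C' - B'))" by (rule bij_betw_combine[OF s1 s2]) blast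
  moreover have "B \<union> (C - B) = C" "B' \<union> (C' - B') = C'" using C(1) C'(1) by auto
  ultimately have sC: "bij_betw \<sigma> C C'" by simp
  have sB: "\<sigma> ` B = B'" using s1 unfolding bij_betw_def by simp
  have sinj: "inj_on \<sigma> C" using sC unfolding bij_betw_def by simp
  have sCC: "\<sigma> ` C = C'" using sC unfolding bij_betw_def by simp
  have spC: "span2 C = cube M" by (rule basis_span[OF C(2-4)])
  have injC: "inj_on vsum (Pow C)" by (rule indep_inj[OF C(3)])
  have injC': "inj_on vsum (Pow C')" by (rule indep_inj[OF C'(3)])
  define rp where "rp v = (THE S. S \<subseteq> C \<and> vsum S = v)" for v
  have rp: "rp (vsum S) = S" if "S \<subseteq> C" for S
    unfolding rp_def
  proof (rule the_equality)
    show "S \<subseteq> C \<and> vsum S = vsum S" using that by simp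
    fix T assume "T \<subseteq> C \<and> vsum T = vsum S"
    then show "T = S" using injC that unfolding inj_on_def by blast
  qed
  have repr: "\<exists>S. S \<subseteq> C \<and> v = vsum S" if "v \<in> cube M" for v
  proof -
    have "v \<in> vsum ` Pow C" using that spC unfolding span2_def by simp
    then obtain S where "S \<in> Pow C" "v = vsum S" by (rule imageE)
    then show ?thesis by blast
  qed
  define L where "L v = vsum (\<sigma> ` rp v)" for v
  have Ls: "L (vsum S) = vsum (\<sigma> ` S)" if "S \<subseteq> C" for S
    unfolding L_def using rp[OF that] by simp
  have "linm M L" unfolding linm_def
  proof (intro conjI ballI)
    fix u v assume u: "u \<in> cube M" and v: "v \<in> cube M"
    obtain S where S: "S \<subseteq> C" "u = vsum S" using repr[OF u] by blast
    obtain T where T: "T \<subseteq> C" "v = vsum T" using repr[OF v] by blast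
    have fS: "finite S" "finite T" using S T fC finite_subset by auto
    have uv: "vadd u v = vsum ((S - T) \<union> (T - S))" using vsum_symdiff[OF fS] S T by simp
    have d1: "\<sigma> ` (S - T) = \<sigma> ` S - \<sigma> ` T" by (rule inj_on_image_set_diff[OF sinj]) (use S T in auto)
    have d2: "\<sigma> ` (T - S) = \<sigma> ` T - \<sigma> ` S" by (rule inj_on_image_set_diff[OF sinj]) (use S T in auto)
    have im: "\<sigma> ` ((S - T) \<union> (T - S)) = (\<sigma> ` S - \<sigma> ` T) \<union> (\<sigma> ` T - \<sigma> ` S)"
      unfolding image_Un d1 d2 ..
    have "L (vadd u v) = vsum (\<sigma> ` ((S - T) \<union> (T - S)))" unfolding uv by (rule Ls) (use S T in auto)
    also have "\<dots> = vadd (vsum (\<sigma> ` S)) (vsum (\<sigma> ` T))" unfolding im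
      using fS by (intro vsum_symdiff) auto
    also have "\<dots> = vadd (L u) (L v)" using Ls S T by simp
    finally show "L (vadd u v) = vadd (L u) (L v)" .
  next
    show "inj_on L (cube M)"
    proof (rule inj_onI)
      fix u v assume u: "u \<in> cube M" and v: "v \<in> cube M" and e: "L u = L v"
      obtain S where S: "S \<subseteq> C" "u = vsum S" using repr[OF u] by blast
      obtain T where T: "T \<subseteq> C" "v = vsum T" using repr[OF v] by blast
      have "vsum (\<sigma> ` S) = vsum (\<sigma> ` T)" using e Ls S T by simp
      moreover have "\<sigma> ` S \<in> Pow C'" "\<sigma> ` T \<in> Pow C'" using S T sCC by auto
      ultimately have "\<sigma> ` S = \<sigma> ` T" by (rule inj_onD[OF injC'])
      then have "S = T" using inj_on_image_eq_iff[OF sinj S(1) T(1)] by simp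
      then show "u = v" using S T by simp
    qed
  next
    show "L ` cube M \<subseteq> cube M"
    proof
      fix w assume "w \<in> L ` cube M"
      then obtain u where u: "u \<in> cube M" "w = L u" by blast
      obtain S where S: "S \<subseteq> C" "u = vsum S" using repr[OF u(1)] by blast
      have "\<sigma> ` S \<subseteq> cube M" using S sCC C'(2) by auto
      then have "vsum (\<sigma> ` S) \<in> cube M" by (rule vsum_cube)
      then show "w \<in> cube M" using u S Ls by simp
    qed
  qed
  then have Ladd: "\<And>u v. u \<in> cube M \<Longrightarrow> v \<in> cube M \<Longrightarrow> L (vadd u v) = vadd (L u) (L v)"
    and Linj: "inj_on L (cube M)" and Lc: "\<And>u. u \<in> cube M \<Longrightarrow> L u \<in> cube M"
    unfolding linm_def by auto
  define g where "g x = (if x \<in> cube M then vadd y0 (L (vadd x0 x)) else {})" for x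
  have gc: "g x \<in> cube M" if "x \<in> cube M" for x using that x0 y0 Lc by (simp add: g_def)
  have ginj: "inj_on g (cube M)"
  proof (rule inj_onI)
    fix u v assume u: "u \<in> cube M" and v: "v \<in> cube M" and e: "g u = g v"
    then have "vadd y0 (L (vadd x0 u)) = vadd y0 (L (vadd x0 v))" using u v by (simp add: g_def)
    then have "vadd y0 (vadd y0 (L (vadd x0 u))) = vadd y0 (vadd y0 (L (vadd x0 v)))" by (rule arg_cong)
    then have "L (vadd x0 u) = L (vadd x0 v)" by (simp only: vadd_cancel)
    then have "vadd x0 u = vadd x0 v" using Linj u v x0 unfolding inj_on_def by simp
    then have "vadd x0 (vadd x0 u) = vadd x0 (vadd x0 v)" by (rule arg_cong)
    then show "u = v" by (simp only: vadd_cancel)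
  qed
  have "g ` cube M = cube M" using gc ginj by (intro endo_inj_surj) auto
  then have gb: "bij_betw g (cube M) (cube M)" using ginj unfolding bij_betw_def by simp
  have ga: "g (vadd x (vadd y z)) = vadd (g x) (vadd (g y) (g z))"
    if xyz: "x \<in> cube M" "y \<in> cube M" "z \<in> cube M" for x y z
  proof -
    have e1: "vadd x0 (vadd x (vadd y z)) = vadd (vadd x0 x) (vadd (vadd x0 y) (vadd x0 z))"
      by (simp add: vadd_ac)
    have "L (vadd x0 (vadd x (vadd y z))) = vadd (L (vadd x0 x)) (vadd (L (vadd x0 y)) (L (vadd x0 z)))"
      unfolding e1 using xyz x0 by (simp add: Ladd)
    then show ?thesis using xyz by (simp add: g_def vadd_ac)
  qed
  have gA: "g \<in> affm M" unfolding affm_def using gb ga by (auto simp: g_def)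
  have "g ` Q = (\<lambda>S. vadd y0 (vsum (\<sigma> ` S))) ` Pow B"
    unfolding Qe span2_def image_image
  proof (intro image_cong refl)
    fix S assume "S \<in> Pow B"
    then have SC: "S \<subseteq> C" using C(1) by auto
    have "vsum S \<in> cube M" using SC C(2) by (intro vsum_cube) auto
    then show "g (vadd x0 (vsum S)) = vadd y0 (vsum (\<sigma> ` S))"
      using x0 Ls[OF SC] by (simp add: g_def)
  qed
  also have "\<dots> = vadd y0 ` vsum ` (image \<sigma> ` Pow B)" by (simp add: image_image)
  also have "image \<sigma> ` Pow B = Pow B'" by (rule image_Pow_surj[OF sB])
  finally have "g ` Q = Q'" unfolding Qe' span2_def .
  then show ?thesis using gA by blast
qed



lemma card_fibers:
  assumes "finite A" "finite B"
  shows "card {x\<in>A. f x \<in> B} = (\<Sum>y\<in>B. card {x\<in>A. f x = y})"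
proof -
  have "{x\<in>A. f x \<in> B} = (\<Union>y\<in>B. {x\<in>A. f x = y})" by blast
  moreover have "card (\<Union>y\<in>B. {x\<in>A. f x = y}) = (\<Sum>y\<in>B. card {x\<in>A. f x = y})"
    using assms by (intro card_UN_disjoint) auto
  ultimately show ?thesis by simp
qed

lemma card_swap:
  assumes "finite A" "finite B"
  shows "(\<Sum>a\<in>A. card {b\<in>B. P a b}) = (\<Sum>b\<in>B. card {a\<in>A. P a b})"
proof -
  have c: "\<And>X Q. finite X \<Longrightarrow> card {x\<in>X. Q x} = (\<Sum>x\<in>X. if Q x then 1 else 0)"
    by (simp add: sum.inter_filter[symmetric])
  show ?thesis using assms by (simp add: c sum.swap[of _ A])
qed

definition cnt :: "nat \<Rightarrow> nat set set \<Rightarrow> nat set set \<Rightarrow> nat" where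
  "cnt M Q Q' = card {g \<in> affm M. g ` Q = Q'}"

lemma cnt_le:
  assumes Q: "Q \<in> flats M d" and Q': "Q' \<in> flats M d" and P: "P \<in> flats M d" and P': "P' \<in> flats M d"
  shows "cnt M Q Q' \<le> cnt M P P'"
proof -
  obtain h where h: "h \<in> affm M" "h ` P = Q" using flat_transitive[OF P Q] by blast
  obtain k where k: "k \<in> affm M" "k ` Q' = P'" using flat_transitive[OF Q' P'] by blast
  define \<phi> where "\<phi> g = compm M k (compm M g h)" for g
  have Psub: "P \<subseteq> cube M" using flat_sub_cube[OF P] .
  have "inj_on \<phi> {g \<in> affm M. g ` Q = Q'}"
  proof (rule inj_onI)
    fix g1 g2 assume g1: "g1 \<in> {g \<in> affm M. g ` Q = Q'}" and g2: "g2 \<in> {g \<in> affm M. g ` Q = Q'}"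
      and e: "\<phi> g1 = \<phi> g2"
    have g1A: "g1 \<in> affm M" and g2A: "g2 \<in> affm M" using g1 g2 by auto
    show "g1 = g2"
    proof (rule affm_eqI[OF g1A g2A])
      fix y assume y: "y \<in> cube M"
      then obtain x where x: "x \<in> cube M" "y = h x" using affm_surj[OF h(1)] by blast
      have "\<phi> g1 x = \<phi> g2 x" using e by simp
      then have "k (g1 y) = k (g2 y)" using x affm_cube[OF h(1)] by (simp add: \<phi>_def compm_def)
      moreover have "g1 y \<in> cube M" "g2 y \<in> cube M" using y affm_cube g1A g2A by auto
      ultimately show "g1 y = g2 y" using affm_inj[OF k(1)] by (rule inj_onD[rotated])
    qed
  qed
  moreover have "\<phi> ` {g \<in> affm M. g ` Q = Q'} \<subseteq> {g \<in> affm M. g ` P = P'}"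
  proof
    fix g' assume "g' \<in> \<phi> ` {g \<in> affm M. g ` Q = Q'}"
    then obtain g where g: "g \<in> affm M" "g ` Q = Q'" and g': "g' = \<phi> g" by blast
    have "g' \<in> affm M" unfolding g' \<phi>_def by (intro compm_affm k h g)
    moreover have "g' ` P = k ` (g ` (h ` P))"
      unfolding g' \<phi>_def image_image using Psub affm_cube[OF h(1)]
      by (intro image_cong) (auto simp: compm_def)
    then have "g' ` P = P'" using g h k by simp
    ultimately show "g' \<in> {g \<in> affm M. g ` P = P'}" by simp
  qed
  moreover have "finite {g \<in> affm M. g ` P = P'}" using finite_affm by simp
  ultimately show ?thesis unfolding cnt_def by (rule card_inj_on_le)
qed

lemma cnt_pos:
  assumes "Q \<in> flats M d" "Q' \<in> flats M d" shows "cnt M Q Q' > 0"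
proof -
  obtain g where "g \<in> affm M" "g ` Q = Q'" using flat_transitive[OF assms] by blast
  then have "{g \<in> affm M. g ` Q = Q'} \<noteq> {}" by blast
  then show ?thesis unfolding cnt_def using finite_affm by (simp add: card_gt_0_iff)
qed

lemma card_affm:
  assumes Q: "Q \<in> flats M d"
  shows "card (affm M) = (\<Sum>Q'\<in>flats M d. cnt M Q Q')"
proof -
  have "card {g \<in> affm M. g ` Q \<in> flats M d} = (\<Sum>Q'\<in>flats M d. card {g \<in> affm M. g ` Q = Q'})"
    by (rule card_fibers[OF finite_affm finite_flats])
  moreover have "{g \<in> affm M. g ` Q \<in> flats M d} = affm M" using affm_flat[OF _ Q] by blast
  ultimately show ?thesis unfolding cnt_def by simp
qed

lemma averaging:
  fixes Qf :: "'i \<Rightarrow> nat set set" and c0 :: real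
  assumes I: "finite I" "I \<noteq> {}" and QfF: "\<And>i. i \<in> I \<Longrightarrow> Qf i \<in> flats M d"
    and bound: "\<And>g. g \<in> affm M \<Longrightarrow> real (card {i\<in>I. card (g ` Qf i \<inter> A) = s}) \<le> c0 * real (card I)"
  shows "lambda_A M d s A \<le> c0"
proof -
  define F where "F = flats M d"
  define Good where "Good = {Q\<in>F. card (Q \<inter> A) = s}"
  obtain i0 where i0: "i0 \<in> I" using I by blast
  define Q0 where "Q0 = Qf i0"
  have Q0F: "Q0 \<in> F" unfolding Q0_def F_def using QfF[OF i0] .
  define c where "c = cnt M Q0 Q0"
  have cc: "cnt M Q Q' = c" if "Q \<in> F" "Q' \<in> F" for Q Q'
    using cnt_le[of Q M d Q' Q0 Q0] cnt_le[of Q0 M d Q0 Q Q'] that Q0F unfolding c_def F_def by simp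
  have cpos: "c > 0" unfolding c_def using cnt_pos Q0F unfolding F_def by blast
  have fF: "finite F" unfolding F_def by (rule finite_flats)
  have Fpos: "card F > 0" using fF Q0F by (auto simp: card_gt_0_iff)
  have fG: "finite Good" using fF unfolding Good_def by simp
  have cG: "card (affm M) = c * card F"
    using card_affm[OF Q0F[unfolded F_def]] cc Q0F unfolding F_def by simp
  have eq1: "card {g\<in>affm M. card (g ` Qf i \<inter> A) = s} = card Good * c" if i: "i \<in> I" for i
  proof -
    have "{g\<in>affm M. card (g ` Qf i \<inter> A) = s} = {g\<in>affm M. g ` Qf i \<in> Good}"
    proof (rule Collect_cong)
      fix g show "(g \<in> affm M \<and> card (g ` Qf i \<inter> A) = s) = (g \<in> affm M \<and> g ` Qf i \<in> Good)"
        using affm_flat[OF _ QfF[OF i], of g] unfolding Good_def F_def by auto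
    qed
    also have "card \<dots> = (\<Sum>Q'\<in>Good. card {g\<in>affm M. g ` Qf i = Q'})"
      by (rule card_fibers[OF finite_affm fG])
    also have "\<dots> = (\<Sum>Q'\<in>Good. c)"
    proof (rule sum.cong[OF refl])
      fix Q' assume "Q' \<in> Good"
      then have "Q' \<in> F" unfolding Good_def by simp
      then show "card {g\<in>affm M. g ` Qf i = Q'} = c"
        using cc[of "Qf i" Q'] QfF[OF i] unfolding cnt_def F_def by simp
    qed
    finally show ?thesis by simp
  qed
  have "real (card I * (card Good * c)) = real (\<Sum>i\<in>I. card {g\<in>affm M. card (g ` Qf i \<inter> A) = s})"
    using eq1 by simp
  also have "\<dots> = real (\<Sum>g\<in>affm M. card {i\<in>I. card (g ` Qf i \<inter> A) = s})"
    by (subst card_swap[OF I(1) finite_affm]) (rule refl)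
  also have "\<dots> = (\<Sum>g\<in>affm M. real (card {i\<in>I. card (g ` Qf i \<inter> A) = s}))" by simp
  also have "\<dots> \<le> (\<Sum>g\<in>affm M. c0 * real (card I))" by (rule sum_mono) (rule bound)
  also have "\<dots> = real (c * card F) * c0 * real (card I)" using cG by simp
  finally have ineq: "real (card I) * real c * real (card Good) \<le> real (card I) * real c * (real (card F) * c0)"
    by (simp add: algebra_simps)
  have pos: "real (card I) * real c > 0" using I cpos by (simp add: card_gt_0_iff)
  have "real (card Good) \<le> real (card F) * c0"
    by (rule mult_le_cancel_left_pos[OF pos, THEN iffD1, OF ineq])
  then show ?thesis unfolding lambda_A_def Good_def[symmetric] F_def[symmetric]
    using Fpos by (simp add: divide_le_eq mult.commute)
qed

lemma pair_bound:
  fixes a :: "nat set \<Rightarrow> nat"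
  assumes fX: "finite X" and s: "odd s"
  shows "2 * card {p \<in> {(x,y). x \<in> X \<and> y \<in> X \<and> x \<noteq> y}. a (fst p) + a (snd p) = s} \<le> card X ^ 2"
proof -
  define Lo where "Lo = {x\<in>X. 2 * a x < s}"
  define Hi where "Hi = {x\<in>X. s < 2 * a x}"
  have sub: "{p \<in> {(x,y). x \<in> X \<and> y \<in> X \<and> x \<noteq> y}. a (fst p) + a (snd p) = s} \<subseteq> Lo \<times> Hi \<union> Hi \<times> Lo"
  proof
    fix p assume p: "p \<in> {p \<in> {(x,y). x \<in> X \<and> y \<in> X \<and> x \<noteq> y}. a (fst p) + a (snd p) = s}"
    obtain x y where xy: "p = (x, y)" by (cases p)
    have x: "x \<in> X" and y: "y \<in> X" and e: "a x + a y = s" using p xy by auto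
    have "2 * a x \<noteq> s" using s by auto
    then show "p \<in> Lo \<times> Hi \<union> Hi \<times> Lo" unfolding Lo_def Hi_def xy using x y e by auto
  qed
  have fin: "finite (Lo \<times> Hi \<union> Hi \<times> Lo)" using fX unfolding Lo_def Hi_def by auto
  have "card {p \<in> {(x,y). x \<in> X \<and> y \<in> X \<and> x \<noteq> y}. a (fst p) + a (snd p) = s} \<le> card (Lo \<times> Hi \<union> Hi \<times> Lo)"
    by (rule card_mono[OF fin sub])
  also have "\<dots> \<le> card (Lo \<times> Hi) + card (Hi \<times> Lo)" by (rule card_Un_le)
  also have "\<dots> = 2 * (card Lo * card Hi)" by (simp add: card_cartesian_product)
  finally have c1: "card {p \<in> {(x,y). x \<in> X \<and> y \<in> X \<and> x \<noteq> y}. a (fst p) + a (snd p) = s} \<le> 2 * (card Lo * card Hi)" .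
  have "X = Lo \<union> Hi"
  proof -
    have "\<And>x. 2 * a x \<noteq> s" using s by auto
    then show ?thesis unfolding Lo_def Hi_def by (auto simp: nat_neq_iff)
  qed
  moreover have "Lo \<inter> Hi = {}" unfolding Lo_def Hi_def by auto
  moreover have "card (Lo \<union> Hi) = card Lo + card Hi"
    by (rule card_Un_disjoint) (use fX \<open>Lo \<inter> Hi = {}\<close> in \<open>auto simp: Lo_def Hi_def\<close>)
  ultimately have cX: "card X = card Lo + card Hi" by simp
  have "4 * (card Lo * card Hi) \<le> (card Lo + card Hi) ^ 2"
  proof -
    have "(int (card Lo) - int (card Hi))^2 \<ge> 0" by simp
    then have "4 * (int (card Lo) * int (card Hi)) \<le> (int (card Lo) + int (card Hi))^2"
      by (simp add: power2_eq_square algebra_simps)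
    then have "int (4 * (card Lo * card Hi)) \<le> int ((card Lo + card Hi) ^ 2)" by simp
    then show ?thesis by (simp only: of_nat_le_iff)
  qed
  then show ?thesis using c1 cX by simp
qed

definition sing :: "nat set \<Rightarrow> nat set set" where
  "sing J = (\<lambda>i. {i}) ` J"

lemma vsum_sing: "finite J \<Longrightarrow> vsum (sing J) = J"
proof -
  assume fJ: "finite J"
  show ?thesis unfolding vsum_def
  proof (intro set_eqI)
    fix j
    have "{v \<in> sing J. j \<in> v} = (if j \<in> J then {{j}} else {})" unfolding sing_def by auto
    then show "j \<in> {i. odd (card {v \<in> sing J. i \<in> v})} \<longleftrightarrow> j \<in> J" by simp
  qed
qed

lemma sing_inj: "inj sing"
proof (rule injI)
  fix J K assume "sing J = sing K"
  then have "\<Union>(sing J) = \<Union>(sing K)" by simp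
  moreover have "\<And>J. \<Union>(sing J) = J" unfolding sing_def by auto
  ultimately show "J = K" by simp
qed

lemma std_basis:
  assumes "k \<le> N"
  shows "span2 (sing {..<k}) = Pow {..<k}" "lin_indep (sing {..<k})" "card (sing {..<k}) = k"
    "sing {..<k} \<subseteq> cube N"
proof -
  have P: "Pow (sing {..<k}) = sing ` Pow {..<k}" unfolding sing_def by (rule image_Pow_surj[symmetric]) simp
  have "span2 (sing {..<k}) = (\<lambda>J. vsum (sing J)) ` Pow {..<k}" unfolding span2_def P image_image ..
  also have "\<dots> = (\<lambda>J. J) ` Pow {..<k}"
  proof (intro image_cong refl)
    fix J assume "J \<in> Pow {..<k}"
    then have "finite J" using finite_subset[of J "{..<k}"] by auto
    then show "vsum (sing J) = J" by (rule vsum_sing)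
  qed
  finally show "span2 (sing {..<k}) = Pow {..<k}" by simp
  show "lin_indep (sing {..<k})" unfolding lin_indep_def
  proof (intro conjI allI impI)
    show "finite (sing {..<k})" unfolding sing_def by simp
    fix S assume S: "S \<subseteq> sing {..<k}" "S \<noteq> {}"
    then have "S \<in> sing ` Pow {..<k}" using P by blast
    then obtain J where J: "J \<subseteq> {..<k}" "S = sing J" by blast
    have fJ: "finite J" using J finite_subset by blast
    have "J \<noteq> {}" using S J unfolding sing_def by auto
    then show "vsum S \<noteq> {}" using vsum_sing[OF fJ] J by simp
  qed
  show "card (sing {..<k}) = k" unfolding sing_def by (subst card_image) (auto simp: inj_on_def)
  show "sing {..<k} \<subseteq> cube N" unfolding sing_def cube_def using assms by auto
qed

lemma pair_flat:
  assumes kN: "k < N" and x: "x \<subseteq> {k..<N}" and y: "y \<subseteq> {k..<N}" and xy: "x \<noteq> y"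
  shows "vadd x ` Pow {..<k} \<union> vadd y ` Pow {..<k} \<in> flats N (Suc k)"
proof -
  note sb = std_basis[of k N]
  define z where "z = vadd x y"
  have zne: "z \<noteq> {}" unfolding z_def using xy vadd_eq_empty by simp
  have zk: "z \<subseteq> {k..<N}" unfolding z_def vadd_def using x y by auto
  have zns: "z \<notin> span2 (sing {..<k})"
  proof
    assume "z \<in> span2 (sing {..<k})"
    then have "z \<subseteq> {..<k}" using sb(1) kN by simp
    then have "z \<subseteq> {..<k} \<inter> {k..<N}" using zk by blast
    moreover have "{..<k} \<inter> {k..<N} = {}" by auto
    ultimately show False using zne by blast
  qed
  note ins = indep_insert[OF sb(2)[OF less_imp_le[OF kN]] zns]
  have fs: "finite (sing {..<k})" unfolding sing_def by simp
  have "span2 (insert z (sing {..<k})) = Pow {..<k} \<union> vadd z ` Pow {..<k}"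
    using span_insert[OF fs ins(2)] sb(1) kN by simp
  then have "vadd x ` span2 (insert z (sing {..<k})) = vadd x ` Pow {..<k} \<union> vadd x ` vadd z ` Pow {..<k}"
    by (simp add: image_Un)
  also have "vadd x ` vadd z ` Pow {..<k} = vadd y ` Pow {..<k}"
    unfolding image_image z_def by (simp add: vadd_assoc[symmetric])
  finally have e: "vadd x ` span2 (insert z (sing {..<k})) = vadd x ` Pow {..<k} \<union> vadd y ` Pow {..<k}" .
  have xc: "x \<in> cube N" using x unfolding cube_def by auto
  have zc: "z \<in> cube N" using zk unfolding cube_def by auto
  have Bc: "insert z (sing {..<k}) \<subseteq> cube N" using zc sb(4) kN by simp
  have cB: "card (insert z (sing {..<k})) = Suc k" using ins(2) fs sb(3) kN by simp
  show ?thesis unfolding flats_iff using xc Bc ins(1) cB e[symmetric] by blast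
qed



lemma coset_minus:
  assumes "x \<subseteq> {k..<N}" "u \<subseteq> {..<k}" shows "vadd x u - {..<k} = x"
proof -
  have "\<And>i. i \<in> x \<Longrightarrow> k \<le> i" using assms(1) by auto
  moreover have "\<And>i. i \<in> u \<Longrightarrow> i < k" using assms(2) by auto
  ultimately show ?thesis unfolding vadd_def by fastforce
qed

lemma coset_disj:
  assumes "x \<subseteq> {k..<N}" "y \<subseteq> {k..<N}" "x \<noteq> y"
  shows "vadd x ` Pow {..<k} \<inter> vadd y ` Pow {..<k} = {}"
proof (rule ccontr)
  assume "vadd x ` Pow {..<k} \<inter> vadd y ` Pow {..<k} \<noteq> {}"
  then obtain u v where u: "u \<subseteq> {..<k}" and v: "v \<subseteq> {..<k}" and e: "vadd x u = vadd y v" by blast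
  have "x = vadd x u - {..<k}" using coset_minus[OF assms(1) u] by simp
  also have "\<dots> = vadd y v - {..<k}" using e by simp
  also have "\<dots> = y" using coset_minus[OF assms(2) v] by simp
  finally show False using assms(3) by simp
qed

lemma coset_cube: "x \<subseteq> {k..<N} \<Longrightarrow> k \<le> N \<Longrightarrow> vadd x ` Pow {..<k} \<subseteq> cube N"
proof
  fix w assume x: "x \<subseteq> {k..<N}" and kN: "k \<le> N" and "w \<in> vadd x ` Pow {..<k}"
  then obtain u where u: "u \<subseteq> {..<k}" "w = vadd x u" by blast
  have "x \<in> cube N" "u \<in> cube N" using x u kN unfolding cube_def by auto
  then show "w \<in> cube N" using u by simp
qed

lemma upper_bound:
  assumes d: "d = Suc k" and kN: "k < N" and s: "odd s"
  shows "lambda_A N d s A \<le> real (2 ^ (N - k)) / (2 * (real (2 ^ (N - k)) - 1))"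
proof -
  define K :: nat where "K = 2 ^ (N - k)"
  define X where "X = Pow {k..<N}"
  define I where "I = {(x,y). x \<in> X \<and> y \<in> X \<and> x \<noteq> y}"
  define U where "U x = vadd x ` Pow {..<k}" for x
  define Qf where "Qf p = U (fst p) \<union> U (snd p)" for p
  have fX: "finite X" unfolding X_def by simp
  have cX: "card X = K" unfolding X_def K_def by (simp add: card_Pow)
  have "(2::nat) ^ 1 \<le> 2 ^ (N - k)" by (rule power_increasing) (use kN in auto)
  then have K2: "K \<ge> 2" unfolding K_def by simp
  have IXX: "I = X \<times> X - (\<lambda>x. (x,x)) ` X" unfolding I_def by auto
  have fI: "finite I" unfolding IXX using fX by simp
  have cI: "card I = K * K - K"
  proof -
    have "card (X \<times> X - (\<lambda>x. (x,x)) ` X) = card (X \<times> X) - card ((\<lambda>x. (x,x)) ` X)"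
      using fX by (intro card_Diff_subset) auto
    moreover have "card ((\<lambda>x. (x,x)) ` X) = K" using cX by (subst card_image) (auto simp: inj_on_def)
    ultimately show ?thesis unfolding IXX using cX by (simp add: card_cartesian_product)
  qed
  have kX: "{k} \<in> X" "{} \<in> X" unfolding X_def using kN by auto
  have InE: "I \<noteq> {}" unfolding I_def using kX by blast
  have QfF: "Qf p \<in> flats N d" if p: "p \<in> I" for p
  proof -
    obtain x y where xy: "p = (x, y)" by (cases p)
    have x: "x \<subseteq> {k..<N}" and y: "y \<subseteq> {k..<N}" and ne: "x \<noteq> y" using p xy unfolding I_def X_def by auto
    show ?thesis unfolding Qf_def U_def xy d fst_conv snd_conv by (rule pair_flat[OF kN x y ne])
  qed
  show ?thesis unfolding K_def[symmetric]
  proof (rule averaging[OF fI InE QfF])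
    fix g assume g: "g \<in> affm N"
    define a where "a x = card (g ` U x \<inter> A)" for x
    have split: "card (g ` Qf p \<inter> A) = a (fst p) + a (snd p)" if p: "p \<in> I" for p
    proof -
      obtain x y where xy: "p = (x, y)" by (cases p)
      have x: "x \<subseteq> {k..<N}" and y: "y \<subseteq> {k..<N}" and ne: "x \<noteq> y" using p xy unfolding I_def X_def by auto
      have Ux: "U x \<subseteq> cube N" and Uy: "U y \<subseteq> cube N" unfolding U_def using x y kN coset_cube by auto
      have "g ` U x \<inter> g ` U y = g ` (U x \<inter> U y)"
        using inj_on_image_Int[OF affm_inj[OF g] Ux Uy] by simp
      also have "U x \<inter> U y = {}" unfolding U_def by (rule coset_disj[OF x y ne])
      finally have dj: "(g ` U x \<inter> A) \<inter> (g ` U y \<inter> A) = {}" by auto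
      have "g ` Qf p \<inter> A = (g ` U x \<inter> A) \<union> (g ` U y \<inter> A)" unfolding Qf_def xy by auto
      moreover have "finite (U x)" "finite (U y)" unfolding U_def by auto
      ultimately have "card (g ` Qf p \<inter> A) = card (g ` U x \<inter> A) + card (g ` U y \<inter> A)"
        using dj by (simp add: card_Un_disjoint)
      then show ?thesis unfolding a_def xy by simp
    qed
    have "{i \<in> I. card (g ` Qf i \<inter> A) = s} = {p \<in> I. a (fst p) + a (snd p) = s}"
      using split by auto
    then have "2 * card {i \<in> I. card (g ` Qf i \<inter> A) = s} \<le> card X ^ 2"
      using pair_bound[OF fX s, of a] unfolding I_def by simp
    then have "2 * card {i \<in> I. card (g ` Qf i \<inter> A) = s} \<le> K * K"
      using cX by (simp add: power2_eq_square)
    then have "real (2 * card {i \<in> I. card (g ` Qf i \<inter> A) = s}) \<le> real (K * K)"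
      by (simp only: of_nat_le_iff)
    then have h: "real (card {i \<in> I. card (g ` Qf i \<inter> A) = s}) \<le> real K * real K / 2" by simp
    have "real (card I) = real K * real K - real K" using cI K2 by (simp add: of_nat_diff)
    then have cI': "real (card I) = real K * (real K - 1)" by (simp add: algebra_simps)
    have nz: "real K - 1 \<noteq> 0" using K2 by simp
    have e2: "real K / (2 * (real K - 1)) * real (card I) = real K * real K / 2"
      unfolding cI' using nz by (simp add: field_simps)
    show "real (card {i \<in> I. card (g ` Qf i \<inter> A) = s}) \<le> real K / (2 * (real K - 1)) * real (card I)"
      by (subst e2) (rule h)
  qed
qed

lemma flats_ne:
  assumes "d = Suc k" "k < N" shows "flats N d \<noteq> {}"
proof -
  have "vadd {} ` Pow {..<k} \<union> vadd {k} ` Pow {..<k} \<in> flats N (Suc k)"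
    using assms by (intro pair_flat) auto
  then show ?thesis using assms by blast
qed

lemma lambda_A_nonneg: "lambda_A n d s A \<ge> 0"
  unfolding lambda_A_def by simp

lemma lambda_n_ge: "A \<subseteq> cube n \<Longrightarrow> lambda_A n d s A \<le> lambda_n n d s"
  unfolding lambda_n_def by (intro Max_ge) auto

lemma lambda_n_le: "(\<And>A. lambda_A n d s A \<le> b) \<Longrightarrow> lambda_n n d s \<le> b"
  unfolding lambda_n_def by (intro Max.boundedI) auto

lemma mono_step:
  assumes d: "d = Suc k" and kN: "k < N"
  shows "lambda_A (Suc N) d s A \<le> lambda_n N d s"
proof (rule averaging[OF finite_flats flats_ne[OF d kN]])
  fix Q assume "Q \<in> flats N d" then show "id Q \<in> flats (Suc N) d" using flats_mono by auto
next
  fix g assume g: "g \<in> affm (Suc N)"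
  define A' where "A' = {x \<in> cube N. g x \<in> A}"
  have ginj: "inj_on g (cube (Suc N))" by (rule affm_inj[OF g])
  have cN: "cube N \<subseteq> cube (Suc N)" by (rule cube_mono) simp
  have eq: "card (g ` id Q \<inter> A) = card (Q \<inter> A')" if Q: "Q \<in> flats N d" for Q
  proof -
    have Qc: "Q \<subseteq> cube N" by (rule flat_sub_cube[OF Q])
    have "g ` id Q \<inter> A = g ` (Q \<inter> A')" unfolding A'_def using Qc by auto
    moreover have "inj_on g (Q \<inter> A')" by (rule inj_on_subset[OF ginj]) (use Qc cN in auto)
    ultimately show ?thesis by (simp add: card_image)
  qed
  have "{Q \<in> flats N d. card (g ` id Q \<inter> A) = s} = {Q \<in> flats N d. card (Q \<inter> A') = s}"
    using eq by auto
  moreover have "real (card {Q \<in> flats N d. card (Q \<inter> A') = s}) = lambda_A N d s A' * real (card (flats N d))"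
  proof -
    have "card (flats N d) > 0" using finite_flats flats_ne[OF d kN] by (simp add: card_gt_0_iff)
    then show ?thesis unfolding lambda_A_def by simp
  qed
  moreover have "lambda_A N d s A' \<le> lambda_n N d s" unfolding A'_def by (rule lambda_n_ge) auto
  ultimately show "real (card {Q \<in> flats N d. card (g ` id Q \<inter> A) = s}) \<le> lambda_n N d s * real (card (flats N d))"
    by (simp add: mult_right_mono)
qed


theorem theorem1p3:
  fixes d s :: nat
  assumes "d \<ge> 1" and "odd s" and "1 < s" and "s < 2 ^ d"
  shows "lambda_star d s \<le> 1 / 2"
proof -
  obtain k where d: "d = Suc k" using assms(1) by (cases d) auto
  define X where "X i = lambda_n (i + d) d s" for i
  have Xmono: "X (Suc i) \<le> X i" for i
    unfolding X_def
  proof (rule lambda_n_le)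
    fix A show "lambda_A (Suc i + d) d s A \<le> lambda_n (i + d) d s"
      using mono_step[OF d, of "i + d"] d by simp
  qed
  have Xnn: "0 \<le> X i" for i
  proof -
    have "lambda_A (i + d) d s {} \<le> X i" unfolding X_def by (rule lambda_n_ge) simp
    then show ?thesis using lambda_A_nonneg[of "i + d" d s "{}"] by linarith
  qed
  have Xub: "X i \<le> real (2 ^ (Suc i)) / (2 * (real (2 ^ (Suc i)) - 1))" for i
  proof -
    have "i + d - k = Suc i" using d by simp
    then show ?thesis unfolding X_def
      using upper_bound[OF d _ assms(2), of "i + d"] d by (intro lambda_n_le) simp
  qed
  have dec: "decseq X" by (rule decseq_SucI) (rule Xmono)
  obtain L where L: "X \<longlonglongrightarrow> L" "\<forall>i. L \<le> X i"
    using decseq_convergent[OF dec, of 0] Xnn by blast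
  have "(\<lambda>n. lambda_n (n + d) d s) \<longlonglongrightarrow> L" using L(1) unfolding X_def .
  then have "(\<lambda>n. lambda_n n d s) \<longlonglongrightarrow> L" by (rule LIMSEQ_offset)
  then have ls: "lambda_star d s = L" unfolding lambda_star_def by (rule limI)
  show ?thesis
  proof (rule ccontr)
    assume "\<not> lambda_star d s \<le> 1 / 2"
    then have "L - 1/2 > 0" using ls by simp
    then obtain n where n: "inverse (real (Suc n)) < L - 1/2" using reals_Archimedean by blast
    define r where "r = real (2 ^ (Suc n) :: nat)"
    have "Suc n < 2 ^ Suc n" by (rule less_exp)
    then have "Suc (Suc n) \<le> 2 ^ Suc n" by (rule Suc_leI)
    then have "real (Suc (Suc n)) \<le> real (2 ^ Suc n :: nat)" by (simp only: of_nat_le_iff)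
    then have r1: "real (Suc n) + 1 \<le> r" unfolding r_def by simp
    have "r / (2 * (r - 1)) = 1/2 + 1 / (2 * (r - 1))" using r1 by (simp add: field_simps)
    also have "1 / (2 * (r - 1)) \<le> 1 / real (Suc n)"
      using r1 by (intro divide_left_mono) auto
    finally have "r / (2 * (r - 1)) \<le> 1/2 + inverse (real (Suc n))" by (simp add: inverse_eq_divide)
    also have "\<dots> < L" using n by simp
    also have "L \<le> X n" using L(2) by simp
    also have "X n \<le> r / (2 * (r - 1))" unfolding r_def by (rule Xub)
    finally show False by simp
  qed
qed

end
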